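(* Let $N,S,k$ be positive integers and let $e_n(s)$ ($1\le n\le N$, $1\le s\le S$) be chosen independently and uniformly from $\{-1,+1\}$; put $G_{N,S}(s)=(e_1(s),\dots,e_N(s))$. For every $\theta\ge0$, \[ \mathbb{P}\left[\left|\Phi_k(G_{N,S})-\mathbb{E}[\Phi_k(G_{N,S})]\right|\ge\theta\right]\le 2\exp\left\{-\frac{\theta^2}{2k^2N}\right\}. \]
   Context: For a map $G_{N,S}:\{1,\dots,S\}\to\{-1,+1\}^N$, $G_{N,S}(s)=(e_1(s),\dots,e_N(s))$, the cross-correlation measure of order $k$ is \[ \Phi_k(G_{N,S})=\max\left|\sum_{n=1}^M e_{n+d_1}(s_1)\cdots e_{n+d_k}(s_k)\right|, \] the maximum taken over all integers $M,d_1,\dots,d_k$ and $1\le s_1,\dots,s_k\le S$ with $0\le d_1\le\dots\le d_k<M+d_k\le N$ and $d_i\ne d_j$ whenever $s_i=s_j$. *)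

theory Defs
  imports "HOL-Probability.Probability"
begin

text \<open>A sign assignment is a function e on pairs (n, s) with 1 \<le> n \<le> N, 1 \<le> s \<le> S,
  e (n, s) = e_n(s) \<in> {-1, +1}; it is extensional (undefined outside the index box).\<close>

definition sign_space :: "nat \<Rightarrow> nat \<Rightarrow> (nat \<times> nat \<Rightarrow> real) set" where
  "sign_space N S = ({1..N} \<times> {1..S}) \<rightarrow>\<^sub>E {-1, 1}"

text \<open>The indices i = 0..k-1 correspond to 1..k in the paper.  The bounds M \<le> N,
  d i < N are implied by the constraints and are stated only to make finiteness evident.\<close>

definition admissible :: "nat \<Rightarrow> nat \<Rightarrow> nat \<Rightarrow> (nat \<times> (nat \<Rightarrow> nat) \<times> (nat \<Rightarrow> nat)) set" where
  "admissible N S k = {(M, d, s). M \<in> {1..N} \<and> d \<in> {0..<k} \<rightarrow>\<^sub>E {0..<N} \<and> s \<in> {0..<k} \<rightarrow>\<^sub>E {1..S}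
      \<and> (\<forall>i j. i \<le> j \<and> j < k \<longrightarrow> d i \<le> d j)
      \<and> d (k - 1) < M + d (k - 1) \<and> M + d (k - 1) \<le> N
      \<and> (\<forall>i<k. \<forall>j<k. i \<noteq> j \<and> s i = s j \<longrightarrow> d i \<noteq> d j)}"

definition cross_corr :: "nat \<Rightarrow> nat \<Rightarrow> nat \<Rightarrow> (nat \<times> nat \<Rightarrow> real) \<Rightarrow> real" where
  "cross_corr N S k e = Max (insert 0
     {\<bar>\<Sum>n = 1..M. \<Prod>i<k. e (n + d i, s i)\<bar> | M d s. (M, d, s) \<in> admissible N S k})"

end

theory Submission imports Defs begin

definition avg :: "'a set \<Rightarrow> ('a \<Rightarrow> real) \<Rightarrow> real" where
  "avg X f = (\<Sum>x\<in>X. f x) / card X"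

lemma hoeffding_finite:
  fixes A :: "'a set" and h :: "'a \<Rightarrow> real"
  assumes A: "finite A" "A \<noteq> {}" and l: "l > 0" and h0: "avg A h = 0"
    and hc: "\<forall>a\<in>A. \<forall>b\<in>A. h a - h b \<le> c"
  shows "avg A (\<lambda>a. exp (l * h a)) \<le> exp (l\<^sup>2 * c\<^sup>2 / 8)"
proof -
  define lo where "lo = Min (h ` A)"
  define hi where "hi = Max (h ` A)"
  have fin: "finite (h ` A)" "h ` A \<noteq> {}" using A by auto
  obtain a1 where a1: "a1 \<in> A" "h a1 = hi" unfolding hi_def using Max_in[OF fin] by auto
  obtain a2 where a2: "a2 \<in> A" "h a2 = lo" unfolding lo_def using Min_in[OF fin] by auto
  have hl: "hi - lo \<le> c" using hc a1 a2 by auto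
  have "lo \<le> hi" unfolding lo_def hi_def using fin by (simp add: Min_le_iff Max_ge_iff) 
  hence sq: "(hi - lo)\<^sup>2 \<le> c\<^sup>2" using hl by (intro power_mono) auto
  interpret interval_bounded_random_variable "measure_pmf (pmf_of_set A)" h lo hi
  proof unfold_locales
    show "AE x in measure_pmf (pmf_of_set A). h x \<in> {lo..hi}"
      using A fin by (auto simp: AE_measure_pmf_iff lo_def hi_def)
  qed simp
  have E: "integral\<^sup>L (measure_pmf (pmf_of_set A)) h = 0" using h0 A by (simp add: integral_pmf_of_set avg_def)
  have "nn_integral (measure_pmf (pmf_of_set A)) (\<lambda>x. ennreal (exp (l * h x))) \<le> ennreal (exp (l\<^sup>2 * (hi - lo)\<^sup>2 / 8))"
    by (rule Hoeffdings_lemma_nn_integral_0[OF l E])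
  moreover have "nn_integral (measure_pmf (pmf_of_set A)) (\<lambda>x. ennreal (exp (l * h x))) = ennreal (avg A (\<lambda>a. exp (l * h a)))"
    using A by (simp add: nn_integral_pmf_of_set avg_def sum_ennreal ennreal_of_nat_eq_real_of_nat
          divide_ennreal sum_nonneg card_gt_0_iff)
  ultimately have "avg A (\<lambda>a. exp (l * h a)) \<le> exp (l\<^sup>2 * (hi - lo)\<^sup>2 / 8)"
    by (simp add: ennreal_le_iff)
  also have "\<dots> \<le> exp (l\<^sup>2 * c\<^sup>2 / 8)" using sq by (simp add: mult_left_mono)
  finally show ?thesis .
qed

lemma sum_PiE_insert:
  assumes "i \<notin> I" "finite I" "finite A"
  shows "(\<Sum>x\<in>PiE (insert i I) (\<lambda>_. A). g x) = (\<Sum>y\<in>PiE I (\<lambda>_. A). \<Sum>a\<in>A. g (y(i:=a)))"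
proof -
  have "(\<Sum>x\<in>PiE (insert i I) (\<lambda>_. A). g x) = (\<Sum>p\<in>A \<times> PiE I (\<lambda>_. A). g ((\<lambda>(y, g). g(i := y)) p))"
    unfolding PiE_insert_eq by (rule sum.reindex[OF inj_combinator[OF assms(1)], unfolded comp_def])
  also have "\<dots> = (\<Sum>a\<in>A. \<Sum>y\<in>PiE I (\<lambda>_. A). g (y(i:=a)))"
    by (simp add: sum.cartesian_product split_def)
  also have "\<dots> = (\<Sum>y\<in>PiE I (\<lambda>_. A). \<Sum>a\<in>A. g (y(i:=a)))"
    by (rule sum.swap)
  finally show ?thesis .
qed

lemma avg_PiE_insert:
  assumes "i \<notin> I" "finite I" "finite A"
  shows "avg (PiE (insert i I) (\<lambda>_. A)) g = avg (PiE I (\<lambda>_. A)) (\<lambda>y. avg A (\<lambda>a. g (y(i:=a))))"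
proof -
  have c: "card (PiE (insert i I) (\<lambda>_. A)) = card A * card (PiE I (\<lambda>_. A))"
    using assms by (simp add: card_PiE)
  show ?thesis unfolding avg_def c sum_PiE_insert[OF assms]
    by (simp add: sum_divide_distrib[symmetric] divide_divide_eq_left mult.commute)
qed

lemma avg_mono: "finite X \<Longrightarrow> (\<And>x. x \<in> X \<Longrightarrow> f x \<le> g x) \<Longrightarrow> avg X f \<le> avg X g"
  unfolding avg_def by (intro divide_right_mono sum_mono) auto

lemma avg_cmult: "avg X (\<lambda>x. K * f x) = K * avg X f"
  unfolding avg_def by (simp add: sum_distrib_left)

lemma avg_const: "finite X \<Longrightarrow> X \<noteq> {} \<Longrightarrow> avg X (\<lambda>x. K) = K"
  unfolding avg_def by simp

lemma avg_diff: "avg X (\<lambda>x. f x - g x) = avg X f - avg X g"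
  unfolding avg_def by (simp add: sum_subtractf diff_divide_distrib)

lemma mgf:
  fixes A :: "'b set" and I :: "'i set"
  assumes I: "finite I" and A: "finite A" "A \<noteq> {}" and l: "l > 0" and c: "c \<ge> 0"
  shows "\<forall>f. (\<forall>x\<in>PiE I (\<lambda>_. A). \<forall>j\<in>I. \<forall>a\<in>A. f x - f (x(j:=a)) \<le> c) \<longrightarrow>
     avg (PiE I (\<lambda>_. A)) (\<lambda>x. exp (l * (f x - avg (PiE I (\<lambda>_. A)) f))) \<le> exp (l\<^sup>2 * real (card I) * c\<^sup>2 / 8)"
  using I
proof (induction I rule: finite_induct)
  case empty
  show ?case by (simp add: avg_def)
next
  case (insert i I)
  show ?case
  proof (intro allI impI)
    fix f :: "('i \<Rightarrow> 'b) \<Rightarrow> real"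
    assume bd: "\<forall>x\<in>PiE (insert i I) (\<lambda>_. A). \<forall>j\<in>insert i I. \<forall>a\<in>A. f x - f (x(j:=a)) \<le> c"
    define X where "X = PiE I (\<lambda>_. A)"
    have Xfin: "finite X" unfolding X_def using insert A by (simp add: finite_PiE)
    have Xne: "X \<noteq> {}" unfolding X_def using A by (simp add: PiE_eq_empty_iff)
    define F where "F y = avg A (\<lambda>a. f (y(i:=a)))" for y
    have upd: "y(i:=a) \<in> PiE (insert i I) (\<lambda>_. A)" if "y \<in> X" "a \<in> A" for y a
      using that unfolding X_def by (auto simp: PiE_iff extensional_def)
    have Ef: "avg (PiE (insert i I) (\<lambda>_. A)) f = avg X F"
      unfolding X_def F_def by (rule avg_PiE_insert) (use insert A in auto)
    have Fbd: "\<forall>y\<in>X. \<forall>j\<in>I. \<forall>b\<in>A. F y - F (y(j:=b)) \<le> c"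
    proof (intro ballI)
      fix y j b assume y: "y \<in> X" and j: "j \<in> I" and b: "b \<in> A"
      have ij: "i \<noteq> j" using insert j by auto
      have "F y - F (y(j:=b)) = avg A (\<lambda>a. f (y(i:=a)) - f ((y(i:=a))(j:=b)))"
        unfolding F_def avg_diff[symmetric] using ij by (simp add: fun_upd_twist)
      also have "\<dots> \<le> avg A (\<lambda>a. c)"
        by (rule avg_mono) (use A bd upd[OF y] j b in auto)
      also have "\<dots> = c" using A by (simp add: avg_const)
      finally show "F y - F (y(j:=b)) \<le> c" .
    qed
    have IH: "avg X (\<lambda>y. exp (l * (F y - avg X F))) \<le> exp (l\<^sup>2 * real (card I) * c\<^sup>2 / 8)"
      using insert.IH Fbd unfolding X_def by blast
    have inner: "avg A (\<lambda>a. exp (l * (f (y(i:=a)) - F y))) \<le> exp (l\<^sup>2 * c\<^sup>2 / 8)" if y: "y \<in> X" for y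
    proof (rule hoeffding_finite[OF A l])
      show "avg A (\<lambda>a. f (y(i:=a)) - F y) = 0"
        unfolding avg_diff F_def using A by (simp add: avg_const)
      show "\<forall>a\<in>A. \<forall>b\<in>A. f (y(i:=a)) - F y - (f (y(i:=b)) - F y) \<le> c"
      proof (intro ballI)
        fix a b assume a: "a \<in> A" and b: "b \<in> A"
        have "f (y(i:=a)) - f ((y(i:=a))(i:=b)) \<le> c" using bd upd[OF y a] b by blast
        thus "f (y(i:=a)) - F y - (f (y(i:=b)) - F y) \<le> c" by simp
      qed
    qed
    have "avg (PiE (insert i I) (\<lambda>_. A)) (\<lambda>x. exp (l * (f x - avg (PiE (insert i I) (\<lambda>_. A)) f)))
        = avg X (\<lambda>y. avg A (\<lambda>a. exp (l * (f (y(i:=a)) - avg X F))))"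
      unfolding Ef X_def by (rule avg_PiE_insert) (use insert A in auto)
    also have "\<dots> = avg X (\<lambda>y. exp (l * (F y - avg X F)) * avg A (\<lambda>a. exp (l * (f (y(i:=a)) - F y))))"
      by (simp add: avg_cmult[symmetric] exp_add[symmetric] algebra_simps)
    also have "\<dots> \<le> avg X (\<lambda>y. exp (l * (F y - avg X F)) * exp (l\<^sup>2 * c\<^sup>2 / 8))"
      by (rule avg_mono[OF Xfin]) (use inner in auto)
    also have "\<dots> = exp (l\<^sup>2 * c\<^sup>2 / 8) * avg X (\<lambda>y. exp (l * (F y - avg X F)))"
      using avg_cmult[of X "exp (l\<^sup>2 * c\<^sup>2 / 8)" "\<lambda>y. exp (l * (F y - avg X F))"]
      by (simp add: mult.commute)
    also have "\<dots> \<le> exp (l\<^sup>2 * c\<^sup>2 / 8) * exp (l\<^sup>2 * real (card I) * c\<^sup>2 / 8)"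
      using IH by simp
    also have "\<dots> = exp (l\<^sup>2 * real (card (insert i I)) * c\<^sup>2 / 8)"
      using insert by (simp add: exp_add[symmetric] algebra_simps add_divide_distrib)
    finally show "avg (PiE (insert i I) (\<lambda>_. A)) (\<lambda>x. exp (l * (f x - avg (PiE (insert i I) (\<lambda>_. A)) f)))
        \<le> exp (l\<^sup>2 * real (card (insert i I)) * c\<^sup>2 / 8)" .
  qed
qed


lemma tail_one:
  fixes A :: "'b set" and I :: "'i set"
  assumes I: "finite I" "card I > 0" and A: "finite A" "A \<noteq> {}" and c: "c > 0" and th: "\<theta> > 0"
    and bd: "\<forall>x\<in>PiE I (\<lambda>_. A). \<forall>j\<in>I. \<forall>a\<in>A. f x - f (x(j:=a)) \<le> c"
  shows "real (card {x\<in>PiE I (\<lambda>_. A). f x - avg (PiE I (\<lambda>_. A)) f \<ge> \<theta>}) / real (card (PiE I (\<lambda>_. A)))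
           \<le> exp (- (2 * \<theta>\<^sup>2 / (real (card I) * c\<^sup>2)))"
proof -
  define X where "X = PiE I (\<lambda>_. A)"
  define n where "n = real (card I)"
  have n: "n > 0" using I n_def by simp
  define l where "l = 4 * \<theta> / (n * c\<^sup>2)"
  have l: "l > 0" using n c th l_def by simp
  have Xfin: "finite X" unfolding X_def using I A by (simp add: finite_PiE)
  have Xne: "X \<noteq> {}" unfolding X_def using A by (simp add: PiE_eq_empty_iff)
  have Xc: "real (card X) > 0" using Xfin Xne by (simp add: card_gt_0_iff)
  define B where "B = {x\<in>X. f x - avg X f \<ge> \<theta>}"
  have "real (card B) * exp (l * \<theta>) = (\<Sum>x\<in>B. exp (l * \<theta>))" by simp
  also have "\<dots> \<le> (\<Sum>x\<in>B. exp (l * (f x - avg X f)))"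
    by (rule sum_mono) (use l in \<open>auto simp: B_def\<close>)
  also have "\<dots> \<le> (\<Sum>x\<in>X. exp (l * (f x - avg X f)))"
    by (rule sum_mono2) (use Xfin in \<open>auto simp: B_def\<close>)
  finally have 1: "real (card B) / real (card X) * exp (l * \<theta>) \<le> avg X (\<lambda>x. exp (l * (f x - avg X f)))"
    unfolding avg_def using Xc by (simp add: divide_right_mono)
  have 2: "avg X (\<lambda>x. exp (l * (f x - avg X f))) \<le> exp (l\<^sup>2 * n * c\<^sup>2 / 8)"
    using mgf[OF I(1) A l, of c] c bd unfolding X_def n_def by auto
  have "real (card B) / real (card X) \<le> exp (l\<^sup>2 * n * c\<^sup>2 / 8) / exp (l * \<theta>)"
    using 1 2 by (simp add: pos_le_divide_eq)
  also have "\<dots> = exp (l\<^sup>2 * n * c\<^sup>2 / 8 - l * \<theta>)" by (simp add: exp_diff)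
  also have "l\<^sup>2 * n * c\<^sup>2 / 8 - l * \<theta> = - (2 * \<theta>\<^sup>2 / (n * c\<^sup>2))"
    unfolding l_def using n c by (simp add: field_simps power2_eq_square)
  finally show ?thesis unfolding B_def X_def n_def .
qed

lemma tail_two:
  fixes A :: "'b set" and I :: "'i set"
  assumes I: "finite I" "card I > 0" and A: "finite A" "A \<noteq> {}" and c: "c > 0" and th: "\<theta> > 0"
    and bd: "\<forall>x\<in>PiE I (\<lambda>_. A). \<forall>j\<in>I. \<forall>a\<in>A. f x - f (x(j:=a)) \<le> c"
  shows "real (card {x\<in>PiE I (\<lambda>_. A). \<bar>f x - avg (PiE I (\<lambda>_. A)) f\<bar> \<ge> \<theta>}) / real (card (PiE I (\<lambda>_. A)))
           \<le> 2 * exp (- (2 * \<theta>\<^sup>2 / (real (card I) * c\<^sup>2)))"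
proof -
  define X where "X = PiE I (\<lambda>_. A)"
  have Xfin: "finite X" unfolding X_def using I A by (simp add: finite_PiE)
  have bd': "\<forall>x\<in>X. \<forall>j\<in>I. \<forall>a\<in>A. (- f x) - (- f (x(j:=a))) \<le> c"
  proof (intro ballI)
    fix x j a assume x: "x \<in> X" and j: "j \<in> I" and a: "a \<in> A"
    have x': "x(j:=a) \<in> X" "x j \<in> A" using x j a unfolding X_def by (auto simp: PiE_iff extensional_def)
    have "f (x(j:=a)) - f ((x(j:=a))(j:= x j)) \<le> c" using bd x' unfolding X_def using j by blast
    thus "(- f x) - (- f (x(j:=a))) \<le> c" by simp
  qed
  note t1 = tail_one[OF I A c th bd]
  note t2 = tail_one[OF I A c th bd'[unfolded X_def]]
  have neg: "avg X (\<lambda>x. - f x) = - avg X f" unfolding avg_def by (simp add: sum_negf)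
  define B1 where "B1 = {x\<in>X. f x - avg X f \<ge> \<theta>}"
  define B2 where "B2 = {x\<in>X. - f x - avg X (\<lambda>x. - f x) \<ge> \<theta>}"
  have "{x\<in>X. \<bar>f x - avg X f\<bar> \<ge> \<theta>} \<subseteq> B1 \<union> B2"
    unfolding B1_def B2_def neg by auto
  hence "card {x\<in>X. \<bar>f x - avg X f\<bar> \<ge> \<theta>} \<le> card (B1 \<union> B2)"
    by (intro card_mono) (auto simp: B1_def B2_def Xfin)
  also have "\<dots> \<le> card B1 + card B2" by (rule card_Un_le)
  finally have "real (card {x\<in>X. \<bar>f x - avg X f\<bar> \<ge> \<theta>}) / real (card X)
      \<le> real (card B1) / real (card X) + real (card B2) / real (card X)"
    by (simp add: add_divide_distrib[symmetric] divide_right_mono)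
  also have "\<dots> \<le> 2 * exp (- (2 * \<theta>\<^sup>2 / (real (card I) * c\<^sup>2)))"
    using t1 t2 unfolding B1_def B2_def X_def by simp
  finally show ?thesis unfolding X_def .
qed


lemma Max_shift:
  assumes "finite P" "c \<ge> 0" "\<And>p. p \<in> P \<Longrightarrow> g p \<le> g' p + c"
  shows "Max (insert 0 (g ` P)) \<le> Max (insert (0::real) (g' ` P)) + c"
proof -
  have m0: "0 \<le> Max (insert (0::real) (g' ` P))" using assms(1) by simp
  have mp: "g' p \<le> Max (insert (0::real) (g' ` P))" if "p \<in> P" for p
    using assms(1) that by simp
  have "g p \<le> Max (insert (0::real) (g' ` P)) + c" if "p \<in> P" for p
    using assms(3)[OF that] mp[OF that] by linarith
  thus ?thesis using assms(1) m0 assms(2) by (auto simp: Max_le_iff)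
qed

lemma admissible_finite: "finite (admissible N S k)"
proof -
  have "admissible N S k \<subseteq> {1..N} \<times> ({0..<k} \<rightarrow>\<^sub>E {0..<N}) \<times> ({0..<k} \<rightarrow>\<^sub>E {1..S})"
    unfolding admissible_def by auto
  moreover have "finite ({1..N} \<times> ({0..<k} \<rightarrow>\<^sub>E {0..<N}) \<times> ({0..<k} \<rightarrow>\<^sub>E {1..S}))"
    by (intro finite_cartesian_product finite_PiE) auto
  ultimately show ?thesis by (rule finite_subset)
qed

definition corr_term :: "nat \<Rightarrow> (nat \<Rightarrow> nat) \<Rightarrow> (nat \<Rightarrow> nat) \<Rightarrow> nat \<Rightarrow> (nat \<times> nat \<Rightarrow> real) \<Rightarrow> real" where
  "corr_term M d s k e = \<bar>\<Sum>n = 1..M. \<Prod>i<k. e (n + d i, s i)\<bar>"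

lemma cross_corr_alt:
  "cross_corr N S k e = Max (insert 0 ((\<lambda>(M, d, s). corr_term M d s k e) ` admissible N S k))"
  unfolding cross_corr_def corr_term_def
  by (rule arg_cong[where f="\<lambda>X. Max (insert 0 X)"]) force

lemma sign_abs:
  assumes "e \<in> sign_space N S" "n \<in> {1..N}" "s \<in> {1..S}"
  shows "\<bar>e (n, s)\<bar> \<le> 1"
proof -
  have "e (n, s) \<in> {-1, 1}" using assms unfolding sign_space_def by (auto simp: PiE_iff)
  thus ?thesis by auto
qed

lemma term_diff:
  assumes e: "e \<in> sign_space N S" and e': "e' \<in> sign_space N S"
    and agree: "\<And>n s. n \<noteq> j \<Longrightarrow> e (n, s) = e' (n, s)"
    and adm: "(M, d, s) \<in> admissible N S k"
  shows "corr_term M d s k e \<le> corr_term M d s k e' + 2 * real k"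
proof -
  have rng: "n + d i \<in> {1..N}" "s i \<in> {1..S}" if "n \<in> {1..M}" "i < k" for n i
  proof -
    have "d i \<le> d (k - 1)" "M + d (k - 1) \<le> N" using adm that unfolding admissible_def by auto
    thus "n + d i \<in> {1..N}" using that by auto
    show "s i \<in> {1..S}" using adm that unfolding admissible_def by (auto simp: PiE_iff)
  qed
  define a where "a n = (\<Prod>i<k. e (n + d i, s i))" for n
  define b where "b n = (\<Prod>i<k. e' (n + d i, s i))" for n
  have ab: "\<bar>a n\<bar> \<le> 1" "\<bar>b n\<bar> \<le> 1" if "n \<in> {1..M}" for n
    unfolding a_def b_def abs_prod
    by (intro prod_le_1; use sign_abs[OF e] sign_abs[OF e'] rng[OF that] in auto)+
  define D where "D = {n\<in>{1..M}. \<exists>i<k. n + d i = j}"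
  have Dsub: "D \<subseteq> (\<lambda>i. j - d i) ` {..<k}" unfolding D_def by force
  have cD: "card D \<le> k"
    using card_mono[OF _ Dsub] card_image_le[of "{..<k}" "\<lambda>i. j - d i"] by simp
  have eq: "a n = b n" if "n \<in> {1..M}" "n \<notin> D" for n
    unfolding a_def b_def using that agree unfolding D_def by (intro prod.cong) auto
  have "(\<Sum>n=1..M. a n) - (\<Sum>n=1..M. b n) = (\<Sum>n=1..M. a n - b n)" by (simp add: sum_subtractf)
  also have "\<dots> = (\<Sum>n\<in>D. a n - b n)"
    by (rule sum.mono_neutral_right) (use eq in \<open>auto simp: D_def\<close>)
  finally have "\<bar>(\<Sum>n=1..M. a n) - (\<Sum>n=1..M. b n)\<bar> \<le> (\<Sum>n\<in>D. \<bar>a n - b n\<bar>)"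
    by (simp add: sum_abs)
  also have "\<dots> \<le> (\<Sum>n\<in>D. 2)"
  proof (rule sum_mono)
    fix n assume "n \<in> D" hence "n \<in> {1..M}" unfolding D_def by auto
    from ab[OF this] show "\<bar>a n - b n\<bar> \<le> 2" by linarith
  qed
  also have "\<dots> = 2 * real (card D)" by simp
  also have "\<dots> \<le> 2 * real k" using cD by simp
  finally show ?thesis unfolding corr_term_def a_def[symmetric] b_def[symmetric] by linarith
qed

lemma cc_diff:
  assumes e: "e \<in> sign_space N S" and e': "e' \<in> sign_space N S"
    and agree: "\<And>n s. n \<noteq> j \<Longrightarrow> e (n, s) = e' (n, s)"
  shows "cross_corr N S k e - cross_corr N S k e' \<le> 2 * real k"
proof -
  have "cross_corr N S k e \<le> cross_corr N S k e' + 2 * real k"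
    unfolding cross_corr_alt
    by (rule Max_shift[OF admissible_finite]) (use term_diff[OF e e' agree] in auto)
  thus ?thesis by simp
qed


definition Uc :: "nat \<Rightarrow> nat \<Rightarrow> (nat \<Rightarrow> nat \<Rightarrow> real) \<Rightarrow> (nat \<times> nat \<Rightarrow> real)" where
  "Uc N S x = (\<lambda>(n, s). if n \<in> {1..N} \<and> s \<in> {1..S} then x n s else undefined)"

lemma Uc_bij: "bij_betw (Uc N S) (PiE {1..N} (\<lambda>_. {1..S} \<rightarrow>\<^sub>E {-1, 1})) (sign_space N S)"
proof -
have "\<forall>x\<in>PiE {1..N} (\<lambda>_. {1..S} \<rightarrow>\<^sub>E {-1, 1}). (\<lambda>n\<in>{1..N}. \<lambda>s\<in>{1..S}. Uc N S x (n, s)) = x"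
proof
  fix x assume x: "x \<in> PiE {1..N} (\<lambda>_. {1..S} \<rightarrow>\<^sub>E {-1::real, 1})"
  show "(\<lambda>n\<in>{1..N}. \<lambda>s\<in>{1..S}. Uc N S x (n, s)) = x"
  proof
    fix n show "(\<lambda>n\<in>{1..N}. \<lambda>s\<in>{1..S}. Uc N S x (n, s)) n = x n"
    proof (cases "n \<in> {1..N}")
      case True
      hence "x n \<in> {1..S} \<rightarrow>\<^sub>E {-1, 1}" using x by auto
      thus ?thesis using True by (auto simp: Uc_def fun_eq_iff PiE_def extensional_def)
    next
      case False thus ?thesis using x by (auto simp: PiE_def extensional_def)
    qed
  qed
qed
moreover have "\<forall>e\<in>sign_space N S. Uc N S (\<lambda>n\<in>{1..N}. \<lambda>s\<in>{1..S}. e (n, s)) = e"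
proof
  fix e assume "e \<in> sign_space N S"
  hence "e \<in> extensional ({1..N} \<times> {1..S})" unfolding sign_space_def by (simp add: PiE_def)
  thus "Uc N S (\<lambda>n\<in>{1..N}. \<lambda>s\<in>{1..S}. e (n, s)) = e"
    by (auto simp: Uc_def fun_eq_iff extensional_def)
qed
moreover have "Uc N S ` PiE {1..N} (\<lambda>_. {1..S} \<rightarrow>\<^sub>E {-1, 1}) \<subseteq> sign_space N S"
  unfolding sign_space_def
proof (intro image_subsetI PiE_I)
  fix x :: "nat \<Rightarrow> nat \<Rightarrow> real" and p assume x: "x \<in> PiE {1..N} (\<lambda>_. {1..S} \<rightarrow>\<^sub>E {-1, 1})"
    and p: "p \<in> {1..N} \<times> {1..S}"
  then obtain n s where ns: "p = (n, s)" "n \<in> {1..N}" "s \<in> {1..S}" by auto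
  hence "x n \<in> {1..S} \<rightarrow>\<^sub>E {-1, 1}" using x by auto
  hence "x n s \<in> {-1, 1}" using ns by auto
  thus "Uc N S x p \<in> {-1, 1}" using ns by (simp add: Uc_def)
next
  fix x :: "nat \<Rightarrow> nat \<Rightarrow> real" and p assume "p \<notin> {1..N} \<times> {1..S}"
  thus "Uc N S x p = undefined" by (auto simp: Uc_def split: prod.splits)
qed
moreover have "(\<lambda>e. \<lambda>n\<in>{1..N}. \<lambda>s\<in>{1..S}. e (n, s)) ` sign_space N S \<subseteq> PiE {1..N} (\<lambda>_. {1..S} \<rightarrow>\<^sub>E {-1::real, 1})"
  unfolding sign_space_def by (auto simp: PiE_iff)
  ultimately show ?thesis
    by (intro bij_betw_byWitness[where f' = "\<lambda>e. (\<lambda>n\<in>{1..N}. \<lambda>s\<in>{1..S}. e (n, s))"]) blast+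
qed

theorem lemma2:
  fixes N S k :: nat and \<theta> :: real
  assumes "N > 0" and "S > 0" and "k > 0" and "\<theta> \<ge> 0"
  shows "measure_pmf.prob (pmf_of_set (sign_space N S))
           {e. \<bar>cross_corr N S k e
                 - measure_pmf.expectation (pmf_of_set (sign_space N S)) (cross_corr N S k)\<bar> \<ge> \<theta>}
         \<le> 2 * exp (- (\<theta>\<^sup>2 / (2 * (real k)\<^sup>2 * real N)))"
proof (cases "\<theta> = 0")
  case True
  have "measure_pmf.prob (pmf_of_set (sign_space N S))
           {e. \<bar>cross_corr N S k e
                 - measure_pmf.expectation (pmf_of_set (sign_space N S)) (cross_corr N S k)\<bar> \<ge> \<theta>} \<le> 1"
    by (rule measure_pmf.prob_le_1)
  thus ?thesis using True by simp
next
  case False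
  hence th: "\<theta> > 0" using assms by simp
  define C where "C = ({1..S} \<rightarrow>\<^sub>E {-1, 1::real})"
  define X where "X = PiE {1..N} (\<lambda>_. C)"
  define SS where "SS = sign_space N S"
  define f where "f x = cross_corr N S k (Uc N S x)" for x
  have bij: "bij_betw (Uc N S) X SS" unfolding X_def C_def SS_def by (rule Uc_bij)
  have Cfin: "finite C" "C \<noteq> {}" unfolding C_def by (auto simp: finite_PiE PiE_eq_empty_iff)
  have Xfin: "finite X" unfolding X_def using Cfin by (simp add: finite_PiE)
  have Xne: "X \<noteq> {}" unfolding X_def using Cfin by (simp add: PiE_eq_empty_iff)
  have SSfin: "finite SS" using bij Xfin bij_betw_finite by blast
  have SSne: "SS \<noteq> {}" using bij Xne by (auto simp: bij_betw_def)
  have inj: "inj_on (Uc N S) X" and img: "Uc N S ` X = SS" using bij by (auto simp: bij_betw_def)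
  have E: "measure_pmf.expectation (pmf_of_set SS) (cross_corr N S k) = avg X f"
  proof -
    have "measure_pmf.expectation (pmf_of_set SS) (cross_corr N S k) = avg SS (cross_corr N S k)"
      using SSfin SSne by (simp add: integral_pmf_of_set avg_def)
    also have "\<dots> = avg X f"
      unfolding avg_def f_def img[symmetric] using inj
      by (simp add: sum.reindex card_image)
    finally show ?thesis .
  qed
  have bd: "\<forall>x\<in>PiE {1..N} (\<lambda>_. C). \<forall>j\<in>{1..N}. \<forall>a\<in>C. f x - f (x(j:=a)) \<le> 2 * real k"
  proof (intro ballI)
    fix x j a assume x: "x \<in> PiE {1..N} (\<lambda>_. C)" and j: "j \<in> {1..N}" and a: "a \<in> C"
    have x': "x(j:=a) \<in> X" using x j a unfolding X_def by (auto simp: PiE_iff extensional_def)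
    have "x \<in> X" using x unfolding X_def .
    hence e: "Uc N S x \<in> SS" and e': "Uc N S (x(j:=a)) \<in> SS" using img x' by auto
    show "f x - f (x(j:=a)) \<le> 2 * real k" unfolding f_def
      by (rule cc_diff[OF e[unfolded SS_def] e'[unfolded SS_def]]) (auto simp: Uc_def)
  qed
  have kpos: "2 * real k > 0" using assms by simp
  note T = tail_two[of "{1..N}" C "2 * real k" \<theta> f, OF _ _ Cfin kpos th bd]
  have T': "real (card {x\<in>X. \<bar>f x - avg X f\<bar> \<ge> \<theta>}) / real (card X)
      \<le> 2 * exp (- (\<theta>\<^sup>2 / (2 * (real k)\<^sup>2 * real N)))"
  proof -
    have eq: "2 * \<theta>\<^sup>2 / (real N * (2 * real k)\<^sup>2) = \<theta>\<^sup>2 / (2 * (real k)\<^sup>2 * real N)"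
      by (simp add: power2_eq_square field_simps)
    show ?thesis using T assms unfolding X_def eq by (simp add: ac_simps)
  qed
  have sets: "SS \<inter> {e. \<bar>cross_corr N S k e - avg X f\<bar> \<ge> \<theta>} = Uc N S ` {x\<in>X. \<bar>f x - avg X f\<bar> \<ge> \<theta>}"
    unfolding f_def img[symmetric] by auto
  have cards: "card (SS \<inter> {e. \<bar>cross_corr N S k e - avg X f\<bar> \<ge> \<theta>}) = card {x\<in>X. \<bar>f x - avg X f\<bar> \<ge> \<theta>}"
    unfolding sets by (rule card_image) (rule inj_on_subset[OF inj], auto)
  have cX: "card SS = card X" using bij by (simp add: bij_betw_same_card)
  have "measure_pmf.prob (pmf_of_set SS) {e. \<bar>cross_corr N S k e
                 - measure_pmf.expectation (pmf_of_set SS) (cross_corr N S k)\<bar> \<ge> \<theta>}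
      = real (card {x\<in>X. \<bar>f x - avg X f\<bar> \<ge> \<theta>}) / real (card X)"
    unfolding E using SSfin SSne by (simp add: measure_pmf_of_set cards cX)
  also have "\<dots> \<le> 2 * exp (- (\<theta>\<^sup>2 / (2 * (real k)\<^sup>2 * real N)))" by (rule T')
  finally show ?thesis unfolding SS_def .
qed

end
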